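(* If $\mathcal E$ is a cofull right functional $A$-module, then the ring $\mathcal K_A(\mathcal E)$ is quadratik and is an essential ideal in itself, i.e. the map $\mathcal K_A(\mathcal E)\to\mathrm{Hom}_{\mathcal K_A(\mathcal E)}(\mathcal K_A(\mathcal E))$, $x\mapsto(y\mapsto xy)$, is injective.
   Context: $G$ is a discrete group; $(A,\alpha)$ is an associative ring (not necessarily commutative or unital) with $G$-action. A ring $R$ is quadratik if every element of $R$ is a finite sum of products $ab$ with $a,b\in R$. A right functional $A$-module is a right $A$-module $\mathcal E$ with a $G$-action $S$ by additive bijections with $S_g(\xi a)=S_g(\xi)\alpha_g(a)$, together with a functional space $\Theta_A(\mathcal E)\subseteq\mathrm{Hom}_A(\mathcal E,A)$ which is a $G$-invariant left $A$-submodule. The compact operators $\mathcal K_A(\mathcal E)$ form the ring of finite sums of operators $\theta_{\eta,\varphi}(\xi)=\eta\varphi(\xi)$ ($\eta\in\mathcal E$, $\varphi\in\Theta_A(\mathcal E)$) under composition. $\mathcal E$ is cofull if every element of $\mathcal E$ is a finite sum of elements $\xi\varphi(\eta)$ with $\xi,\eta\in\mathcal E$, $\varphi\in\Theta_A(\mathcal E)$. *)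

theory Defs
  imports "HOL-Algebra.Group"
begin

text \<open>A (not necessarily commutative or unital) ring A is modelled by a type of class
  ring (HOL's class ring has no unit).\<close>

definition ring_action :: "('g, 'b) monoid_scheme \<Rightarrow> ('g \<Rightarrow> 'a::ring \<Rightarrow> 'a) \<Rightarrow> bool" where
  "ring_action G \<alpha> \<longleftrightarrow>
     (\<forall>g\<in>carrier G. bij (\<alpha> g) \<and> (\<forall>a b. \<alpha> g (a + b) = \<alpha> g a + \<alpha> g b)
                       \<and> (\<forall>a b. \<alpha> g (a * b) = \<alpha> g a * \<alpha> g b)) \<and>
     \<alpha> \<one>\<^bsub>G\<^esub> = id \<and>
     (\<forall>g\<in>carrier G. \<forall>h\<in>carrier G. \<alpha> (g \<otimes>\<^bsub>G\<^esub> h) = \<alpha> g \<circ> \<alpha> h)"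

definition right_module :: "('e::ab_group_add \<Rightarrow> 'a::ring \<Rightarrow> 'e) \<Rightarrow> bool" where
  "right_module smul \<longleftrightarrow>
     (\<forall>\<xi> \<eta> a. smul (\<xi> + \<eta>) a = smul \<xi> a + smul \<eta> a) \<and>
     (\<forall>\<xi> a b. smul \<xi> (a + b) = smul \<xi> a + smul \<xi> b) \<and>
     (\<forall>\<xi> a b. smul \<xi> (a * b) = smul (smul \<xi> a) b)"

definition module_hom :: "('e::ab_group_add \<Rightarrow> 'a::ring \<Rightarrow> 'e) \<Rightarrow> ('e \<Rightarrow> 'a) \<Rightarrow> bool" where
  "module_hom smul \<phi> \<longleftrightarrow>
     (\<forall>\<xi> \<eta>. \<phi> (\<xi> + \<eta>) = \<phi> \<xi> + \<phi> \<eta>) \<and> (\<forall>\<xi> a. \<phi> (smul \<xi> a) = \<phi> \<xi> * a)"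

text \<open>G acts on Hom_A(E,A) by (g . phi)(xi) = alpha_g(phi(S_{g^-1} xi)).\<close>
definition right_functional_module ::
  "('g, 'b) monoid_scheme \<Rightarrow> ('g \<Rightarrow> 'a::ring \<Rightarrow> 'a) \<Rightarrow> ('e::ab_group_add \<Rightarrow> 'a \<Rightarrow> 'e)
   \<Rightarrow> ('g \<Rightarrow> 'e \<Rightarrow> 'e) \<Rightarrow> ('e \<Rightarrow> 'a) set \<Rightarrow> bool" where
  "right_functional_module G \<alpha> smul S \<Theta> \<longleftrightarrow>
     right_module smul \<and>
     (\<forall>g\<in>carrier G. bij (S g) \<and> (\<forall>\<xi> \<eta>. S g (\<xi> + \<eta>) = S g \<xi> + S g \<eta>)
                       \<and> (\<forall>\<xi> a. S g (smul \<xi> a) = smul (S g \<xi>) (\<alpha> g a))) \<and>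
     S \<one>\<^bsub>G\<^esub> = id \<and>
     (\<forall>g\<in>carrier G. \<forall>h\<in>carrier G. S (g \<otimes>\<^bsub>G\<^esub> h) = S g \<circ> S h) \<and>
     (\<forall>\<phi>\<in>\<Theta>. module_hom smul \<phi>) \<and>
     (\<lambda>\<xi>. 0) \<in> \<Theta> \<and>
     (\<forall>\<phi>\<in>\<Theta>. \<forall>\<psi>\<in>\<Theta>. (\<lambda>\<xi>. \<phi> \<xi> + \<psi> \<xi>) \<in> \<Theta>) \<and>
     (\<forall>\<phi>\<in>\<Theta>. (\<lambda>\<xi>. - \<phi> \<xi>) \<in> \<Theta>) \<and>
     (\<forall>\<phi>\<in>\<Theta>. \<forall>a. (\<lambda>\<xi>. a * \<phi> \<xi>) \<in> \<Theta>) \<and>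
     (\<forall>g\<in>carrier G. \<forall>\<phi>\<in>\<Theta>. (\<lambda>\<xi>. \<alpha> g (\<phi> (S (inv\<^bsub>G\<^esub> g) \<xi>))) \<in> \<Theta>)"

definition compact_ops :: "('e::ab_group_add \<Rightarrow> 'a \<Rightarrow> 'e) \<Rightarrow> ('e \<Rightarrow> 'a) set \<Rightarrow> ('e \<Rightarrow> 'e) set" where
  "compact_ops smul \<Theta> =
     {T. \<exists>ps :: ('e \<times> ('e \<Rightarrow> 'a)) list. (\<forall>p\<in>set ps. snd p \<in> \<Theta>) \<and>
          T = (\<lambda>\<xi>. sum_list (map (\<lambda>(\<eta>, \<phi>). smul \<eta> (\<phi> \<xi>)) ps))}"

definition cofull :: "('e::ab_group_add \<Rightarrow> 'a \<Rightarrow> 'e) \<Rightarrow> ('e \<Rightarrow> 'a) set \<Rightarrow> bool" where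
  "cofull smul \<Theta> \<longleftrightarrow>
     (\<forall>x. \<exists>ps :: ('e \<times> 'e \<times> ('e \<Rightarrow> 'a)) list. (\<forall>p\<in>set ps. snd (snd p) \<in> \<Theta>) \<and>
          x = sum_list (map (\<lambda>(\<xi>, \<eta>, \<phi>). smul \<xi> (\<phi> \<eta>)) ps))"

text \<open>Quadratik for the operator ring K (addition pointwise, product = composition):
  every element is a finite sum of products of elements of K.\<close>
definition quadratik_ops :: "('e::ab_group_add \<Rightarrow> 'e) set \<Rightarrow> bool" where
  "quadratik_ops K \<longleftrightarrow>
     (\<forall>T\<in>K. \<exists>ps :: (('e \<Rightarrow> 'e) \<times> ('e \<Rightarrow> 'e)) list. (\<forall>p\<in>set ps. fst p \<in> K \<and> snd p \<in> K) \<and>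
          T = (\<lambda>\<xi>. sum_list (map (\<lambda>(U, V). U (V \<xi>)) ps)))"

end

theory Submission
  imports Defs
begin

lemma smul_zero_left:
  assumes "right_module smul" shows "smul 0 a = 0"
proof -
  have "smul (0+0) a = smul 0 a + smul 0 a" using assms unfolding right_module_def by blast
  then show ?thesis by simp
qed

lemma smul_sum_left:
  assumes "right_module smul"
  shows "smul (sum_list (map f xs)) a = sum_list (map (\<lambda>x. smul (f x) a) xs)"
proof (induction xs)
  case Nil then show ?case using smul_zero_left[OF assms] by simp
next
  case (Cons x xs) then show ?case using assms unfolding right_module_def by simp
qed

lemma compact_add:
  assumes rm: "right_module smul" and hom: "\<forall>\<phi>\<in>\<Theta>. module_hom smul \<phi>"
    and T: "T \<in> compact_ops smul \<Theta>"
  shows "T (a + b) = T a + T b"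
proof -
  obtain ps where ps: "\<forall>p\<in>set ps. snd p \<in> \<Theta>"
    and Tdef: "T = (\<lambda>\<xi>. sum_list (map (\<lambda>(\<eta>, \<phi>). smul \<eta> (\<phi> \<xi>)) ps))"
    using T unfolding compact_ops_def by blast
  have "sum_list (map (\<lambda>(\<eta>, \<phi>). smul \<eta> (\<phi> (a+b))) ps)
      = sum_list (map (\<lambda>(\<eta>, \<phi>). smul \<eta> (\<phi> a)) ps) + sum_list (map (\<lambda>(\<eta>, \<phi>). smul \<eta> (\<phi> b)) ps)"
    using ps
  proof (induction ps)
    case Nil then show ?case by simp
  next
    case (Cons p ps)
    obtain \<eta> \<phi> where p: "p = (\<eta>, \<phi>)" by fastforce
    have "\<phi> \<in> \<Theta>" using Cons.prems p by auto
    then have "\<phi> (a+b) = \<phi> a + \<phi> b" using hom unfolding module_hom_def by blast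
    then have "smul \<eta> (\<phi> (a+b)) = smul \<eta> (\<phi> a) + smul \<eta> (\<phi> b)"
      using rm unfolding right_module_def by simp
    then show ?case using Cons p by (simp add: algebra_simps)
  qed
  then show ?thesis using Tdef by simp
qed

lemma compact_zero:
  assumes rm: "right_module smul" and hom: "\<forall>\<phi>\<in>\<Theta>. module_hom smul \<phi>"
    and T: "T \<in> compact_ops smul \<Theta>"
  shows "T 0 = 0"
proof -
  have "T (0+0) = T 0 + T 0" using compact_add[OF assms] .
  then show ?thesis by simp
qed

lemma compact_sum:
  assumes rm: "right_module smul" and hom: "\<forall>\<phi>\<in>\<Theta>. module_hom smul \<phi>"
    and T: "T \<in> compact_ops smul \<Theta>"
  shows "T (sum_list (map f xs)) = sum_list (map (\<lambda>x. T (f x)) xs)"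
  by (induction xs) (simp_all add: compact_zero[OF assms] compact_add[OF assms])

lemma theta_in:
  assumes "\<phi> \<in> \<Theta>"
  shows "(\<lambda>x. smul a (\<phi> x)) \<in> compact_ops smul \<Theta>"
  unfolding compact_ops_def
  by (rule CollectI, rule exI[of _ "[(a, \<phi>)]"]) (simp add: assms)

lemma quad_aux:
  fixes smul :: "'e::ab_group_add \<Rightarrow> 'a::ring \<Rightarrow> 'e"
  assumes rm: "right_module smul" and hom: "\<forall>\<phi>\<in>\<Theta>. module_hom smul \<phi>"
    and cf: "cofull smul \<Theta>"
    and ps: "\<forall>p\<in>set ps. snd p \<in> \<Theta>"
  shows "\<exists>qs :: (('e \<Rightarrow> 'e) \<times> ('e \<Rightarrow> 'e)) list.
           (\<forall>p\<in>set qs. fst p \<in> compact_ops smul \<Theta> \<and> snd p \<in> compact_ops smul \<Theta>) \<and>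
           (\<forall>\<xi>. sum_list (map (\<lambda>(\<eta>, \<phi>). smul \<eta> (\<phi> \<xi>)) ps) = sum_list (map (\<lambda>(U, V). U (V \<xi>)) qs))"
  using ps
proof (induction ps)
  case Nil then show ?case by (intro exI[of _ "[]"]) simp
next
  case (Cons p ps)
  obtain \<eta> \<phi> where p: "p = (\<eta>, \<phi>)" by fastforce
  have phi: "\<phi> \<in> \<Theta>" using Cons.prems p by auto
  obtain qs where qs: "\<forall>p\<in>set qs. fst p \<in> compact_ops smul \<Theta> \<and> snd p \<in> compact_ops smul \<Theta>"
    "\<forall>\<xi>. sum_list (map (\<lambda>(\<eta>, \<phi>). smul \<eta> (\<phi> \<xi>)) ps) = sum_list (map (\<lambda>(U, V). U (V \<xi>)) qs)"
    using Cons by auto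
  obtain rs :: "('e \<times> 'e \<times> ('e \<Rightarrow> 'a)) list" where rs: "\<forall>p\<in>set rs. snd (snd p) \<in> \<Theta>"
    and eta: "\<eta> = sum_list (map (\<lambda>(\<xi>, \<zeta>, \<psi>). smul \<xi> (\<psi> \<zeta>)) rs)"
    using cf unfolding cofull_def by blast
  define qs0 where "qs0 = map (\<lambda>(\<xi>', \<zeta>, \<psi>). ((\<lambda>x. smul \<xi>' (\<psi> x)), (\<lambda>x. smul \<zeta> (\<phi> x)))) rs"
  have qs0K: "\<forall>p\<in>set qs0. fst p \<in> compact_ops smul \<Theta> \<and> snd p \<in> compact_ops smul \<Theta>"
    using rs phi unfolding qs0_def by (auto intro!: theta_in)
  have single: "smul \<eta> (\<phi> \<xi>) = sum_list (map (\<lambda>(U, V). U (V \<xi>)) qs0)" for \<xi>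
  proof -
    have "smul \<eta> (\<phi> \<xi>) = sum_list (map (\<lambda>x. smul ((\<lambda>(\<xi>, \<zeta>, \<psi>). smul \<xi> (\<psi> \<zeta>)) x) (\<phi> \<xi>)) rs)"
      unfolding eta by (rule smul_sum_left[OF rm])
    also have "\<dots> = sum_list (map (\<lambda>(U, V). U (V \<xi>)) qs0)"
      unfolding qs0_def map_map
    proof (rule arg_cong[where f=sum_list], rule map_cong[OF refl])
      fix r assume r: "r \<in> set rs"
      obtain a z \<psi> where rr: "r = (a, z, \<psi>)" by (cases r) auto
      have psi: "module_hom smul \<psi>" using rs r rr hom by auto
      have "smul (smul a (\<psi> z)) (\<phi> \<xi>) = smul a (\<psi> z * \<phi> \<xi>)"
        using rm unfolding right_module_def by simp
      also have "\<dots> = smul a (\<psi> (smul z (\<phi> \<xi>)))"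
        using psi unfolding module_hom_def by simp
      finally show "(\<lambda>x. smul ((\<lambda>(\<xi>, \<zeta>, \<psi>). smul \<xi> (\<psi> \<zeta>)) x) (\<phi> \<xi>)) r =
         ((\<lambda>(U, V). U (V \<xi>)) \<circ> (\<lambda>(\<xi>', \<zeta>, \<psi>). (\<lambda>x. smul \<xi>' (\<psi> x), \<lambda>x. smul \<zeta> (\<phi> x)))) r"
        using rr by simp
    qed
    finally show ?thesis .
  qed
  show ?case
    apply (rule exI[of _ "qs0 @ qs"])
    using qs qs0K single p by auto
qed

theorem lemma2p14:
  fixes G :: "('g, 'b) monoid_scheme"
    and \<alpha> :: "'g \<Rightarrow> 'a::ring \<Rightarrow> 'a"
    and smul :: "'e::ab_group_add \<Rightarrow> 'a \<Rightarrow> 'e"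
    and S :: "'g \<Rightarrow> 'e \<Rightarrow> 'e"
    and \<Theta> :: "('e \<Rightarrow> 'a) set"
  assumes "group G"
    and "ring_action G \<alpha>"
    and "right_functional_module G \<alpha> smul S \<Theta>"
    and "cofull smul \<Theta>"
  shows "quadratik_ops (compact_ops smul \<Theta>) \<and>
         inj_on (\<lambda>x. restrict (\<lambda>y. x \<circ> y) (compact_ops smul \<Theta>)) (compact_ops smul \<Theta>)"
proof
  have rm: "right_module smul" and hom: "\<forall>\<phi>\<in>\<Theta>. module_hom smul \<phi>"
    using assms(3) unfolding right_functional_module_def by auto
  show "quadratik_ops (compact_ops smul \<Theta>)"
    unfolding quadratik_ops_def
  proof
    fix T assume "T \<in> compact_ops smul \<Theta>"
    then obtain ps where ps: "\<forall>p\<in>set ps. snd p \<in> \<Theta>"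
      and Tdef: "T = (\<lambda>\<xi>. sum_list (map (\<lambda>(\<eta>, \<phi>). smul \<eta> (\<phi> \<xi>)) ps))"
      unfolding compact_ops_def by blast
    from quad_aux[OF rm hom assms(4) ps] obtain qs where
      "\<forall>p\<in>set qs. fst p \<in> compact_ops smul \<Theta> \<and> snd p \<in> compact_ops smul \<Theta>"
      "\<forall>\<xi>. sum_list (map (\<lambda>(\<eta>, \<phi>). smul \<eta> (\<phi> \<xi>)) ps) = sum_list (map (\<lambda>(U, V). U (V \<xi>)) qs)"
      by blast
    then show "\<exists>qs :: (('e \<Rightarrow> 'e) \<times> ('e \<Rightarrow> 'e)) list. (\<forall>p\<in>set qs. fst p \<in> compact_ops smul \<Theta> \<and> snd p \<in> compact_ops smul \<Theta>) \<and>
          T = (\<lambda>\<xi>. sum_list (map (\<lambda>(U, V). U (V \<xi>)) qs))"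
      using Tdef by auto
  qed
  show "inj_on (\<lambda>x. restrict (\<lambda>y. x \<circ> y) (compact_ops smul \<Theta>)) (compact_ops smul \<Theta>)"
  proof (rule inj_onI)
    fix x x' assume x: "x \<in> compact_ops smul \<Theta>" and x': "x' \<in> compact_ops smul \<Theta>"
      and eq: "restrict (\<lambda>y. x \<circ> y) (compact_ops smul \<Theta>) = restrict (\<lambda>y. x' \<circ> y) (compact_ops smul \<Theta>)"
    have yeq: "x (y z) = x' (y z)" if "y \<in> compact_ops smul \<Theta>" for y z
    proof -
      have "restrict (\<lambda>y. x \<circ> y) (compact_ops smul \<Theta>) y = restrict (\<lambda>y. x' \<circ> y) (compact_ops smul \<Theta>) y"
        using eq by simp
      then have "x \<circ> y = x' \<circ> y" using that by simp
      then show ?thesis by (metis comp_apply)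
    qed
    show "x = x'"
    proof
      fix \<xi>
      obtain rs :: "('e \<times> 'e \<times> ('e \<Rightarrow> 'a)) list" where rs: "\<forall>p\<in>set rs. snd (snd p) \<in> \<Theta>"
        and xi: "\<xi> = sum_list (map (\<lambda>(a, \<zeta>, \<psi>). smul a (\<psi> \<zeta>)) rs)"
        using assms(4) unfolding cofull_def by blast
      have "x \<xi> = sum_list (map (\<lambda>r. x ((\<lambda>(a, \<zeta>, \<psi>). smul a (\<psi> \<zeta>)) r)) rs)"
        unfolding xi by (rule compact_sum[OF rm hom x])
      also have "\<dots> = sum_list (map (\<lambda>r. x' ((\<lambda>(a, \<zeta>, \<psi>). smul a (\<psi> \<zeta>)) r)) rs)"
      proof (rule arg_cong[where f=sum_list], rule map_cong[OF refl])
        fix r assume r: "r \<in> set rs"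
        obtain a z \<psi> where rr: "r = (a, z, \<psi>)" by (cases r) auto
        have "\<psi> \<in> \<Theta>" using rs r rr by auto
        from yeq[OF theta_in[OF this, of smul a], of z]
        show "x ((\<lambda>(a, \<zeta>, \<psi>). smul a (\<psi> \<zeta>)) r) = x' ((\<lambda>(a, \<zeta>, \<psi>). smul a (\<psi> \<zeta>)) r)"
          using rr by simp
      qed
      also have "\<dots> = x' \<xi>"
        unfolding xi by (rule compact_sum[OF rm hom x', symmetric])
      finally show "x \<xi> = x' \<xi>" .
    qed
  qed
qed

end
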